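(* Let $p\in(0,1)$ and let $(\lambda_n)_{n\ge1}$ be a sequence with $\lambda_1=1$ and $0<\lambda_n\le\lambda_{n-1}$ for all $n>1$. Let $r_1,r_2,\dots$ be $\{0,1\}$-valued random variables with $\Pr(r_1=1)=p$ and, for every $n\ge2$, $\Pr(r_n=1\mid r_1,\dots,r_{n-1})=\lambda_n p+(1-\lambda_n)\bar p_{n-1}$, where $\bar p_m=\frac1m\sum_{i=1}^m r_i$. Define $\hat r_1=r_1$, $\hat r_i=\frac{r_i-(1-\lambda_i)\bar p_{i-1}}{\lambda_i}$ for $i\ge2$, and for weights $\omega_1,\dots,\omega_n>0$ let $\hat p_n=\frac{\sum_{i=1}^n\omega_i\hat r_i}{\sum_{i=1}^n\omega_i}$. Then \[\mathrm{Var}[\hat p_n]=\frac{1}{\big(\sum_{i=1}^n\omega_i\big)^2}\sum_{i=1}^n\frac{\omega_i^2}{\lambda_i^2}\Big(p(1-p)-(1-\lambda_i)^2\,\mathrm{Var}[\bar p_{i-1}]\Big),\] where the $i=1$ term is read as $\omega_1^2\,p(1-p)$ (since $1-\lambda_1=0$). *)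

theory Defs
  imports "HOL-Probability.Probability"
begin

definition pbar :: "(nat \<Rightarrow> 'a \<Rightarrow> real) \<Rightarrow> nat \<Rightarrow> 'a \<Rightarrow> real" where
  "pbar r m x = (\<Sum>i=1..m. r i x) / real m"

definition rhat :: "(nat \<Rightarrow> real) \<Rightarrow> (nat \<Rightarrow> 'a \<Rightarrow> real) \<Rightarrow> nat \<Rightarrow> 'a \<Rightarrow> real" where
  "rhat lam r i x = (if i = 1 then r 1 x
                     else (r i x - (1 - lam i) * pbar r (i - 1) x) / lam i)"

definition phat :: "(nat \<Rightarrow> real) \<Rightarrow> (nat \<Rightarrow> real) \<Rightarrow> (nat \<Rightarrow> 'a \<Rightarrow> real) \<Rightarrow> nat \<Rightarrow> 'a \<Rightarrow> real" where
  "phat w lam r n x = (\<Sum>i=1..n. w i * rhat lam r i x) / (\<Sum>i=1..n. w i)"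

text \<open>Since r_1..r_{n-1} are discrete, the conditional probability is stated atom-wise:
  for every 0/1 history b, P(history = b and r_n = 1) = (lambda_n p + (1-lambda_n) mean(b)) * P(history = b).\<close>
definition reinforced_process ::
  "'a measure \<Rightarrow> real \<Rightarrow> (nat \<Rightarrow> real) \<Rightarrow> (nat \<Rightarrow> 'a \<Rightarrow> real) \<Rightarrow> bool" where
  "reinforced_process M p lam r \<longleftrightarrow>
     (\<forall>i\<ge>1. r i \<in> borel_measurable M \<and> (\<forall>x\<in>space M. r i x \<in> {0, 1})) \<and>
     measure M {x\<in>space M. r 1 x = 1} = p \<and>
     (\<forall>n\<ge>2. \<forall>b::nat \<Rightarrow> real. (\<forall>i\<in>{1..<n}. b i \<in> {0, 1}) \<longrightarrow>
        measure M {x\<in>space M. (\<forall>i\<in>{1..<n}. r i x = b i) \<and> r n x = 1}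
        = (lam n * p + (1 - lam n) * ((\<Sum>i=1..<n. b i) / real (n - 1)))
          * measure M {x\<in>space M. \<forall>i\<in>{1..<n}. r i x = b i})"

end

theory Submission imports Defs begin

locale rproc = prob_space M for M :: "'a measure" +
  fixes p :: real and lam :: "nat \<Rightarrow> real" and r :: "nat \<Rightarrow> 'a \<Rightarrow> real"
  assumes lam1: "lam 1 = 1" and lampos': "\<And>k. 1 < k \<Longrightarrow> 0 < lam k"
    and RP: "reinforced_process M p lam r"
begin

lemma rmeas[measurable]: "1 \<le> i \<Longrightarrow> r i \<in> borel_measurable M"
  using RP unfolding reinforced_process_def by auto

lemma r01: "1 \<le> i \<Longrightarrow> x \<in> space M \<Longrightarrow> r i x = 0 \<or> r i x = 1"
  using RP unfolding reinforced_process_def by auto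

lemma lampos: "1 \<le> k \<Longrightarrow> 0 < lam k"
  using lam1 lampos'[of k] by (cases "k = 1") auto

definition At :: "nat \<Rightarrow> (nat \<Rightarrow> real) \<Rightarrow> 'a set" where
  "At m b = {x\<in>space M. \<forall>i\<in>{1..<m}. r i x = b i}"
definition HH :: "nat \<Rightarrow> (nat \<Rightarrow> real) set" where
  "HH m = PiE {1..<m} (\<lambda>_. {0,1})"
definition hb :: "nat \<Rightarrow> 'a \<Rightarrow> (nat \<Rightarrow> real)" where
  "hb m x = restrict (\<lambda>i. r i x) {1..<m}"
definition qq :: "nat \<Rightarrow> 'a \<Rightarrow> real" where
  "qq m x = lam m * p + (1 - lam m) * pbar r (m - 1) x"
definition hdet :: "nat \<Rightarrow> ('a \<Rightarrow> real) \<Rightarrow> bool" where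
  "hdet m g \<longleftrightarrow> g \<in> borel_measurable M \<and>
     (\<forall>x\<in>space M. \<forall>y\<in>space M. (\<forall>i\<in>{1..<m}. r i x = r i y) \<longrightarrow> g x = g y)"

lemma At_sets: "At m b \<in> sets M"
proof -
  have "{x\<in>space M. r i x = b i} \<in> sets M" if "i \<in> {1..<m}" for i
  proof -
    have [measurable]: "r i \<in> borel_measurable M" using that by (intro rmeas) auto
    show ?thesis by measurable
  qed
  then show ?thesis unfolding At_def by (intro sets.sets_Collect_finite_All) auto
qed

lemma HH_finite: "finite (HH m)" unfolding HH_def by (intro finite_PiE) auto

lemma hb_HH: "x \<in> space M \<Longrightarrow> hb m x \<in> HH m"
  unfolding hb_def HH_def restrict_PiE_iff using r01 by auto

lemma hb_At: "x \<in> space M \<Longrightarrow> x \<in> At m (hb m x)"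
  unfolding hb_def At_def by simp

lemma At_hb: "b \<in> HH m \<Longrightarrow> x \<in> At m b \<Longrightarrow> b = hb m x"
proof (rule ext)
  fix i assume b: "b \<in> HH m" and x: "x \<in> At m b"
  show "b i = hb m x i"
  proof (cases "i \<in> {1..<m}")
    case True
    have "r i x = b i" using x True unfolding At_def by blast
    moreover have "hb m x i = r i x" unfolding hb_def using True by simp
    ultimately show ?thesis by simp
  next
    case False
    have "b i = undefined" using b False unfolding HH_def by (rule PiE_arb)
    moreover have "hb m x i = undefined" using False by (auto simp: hb_def)
    ultimately show ?thesis by simp
  qed
qed

lemma sum_ind: "x \<in> space M \<Longrightarrow> (\<Sum>b\<in>HH m. indicator (At m b) x) = (1::real)"
proof -
  assume x: "x \<in> space M"
  have "(\<Sum>b\<in>HH m. indicator (At m b) x) = (\<Sum>b\<in>HH m. if b = hb m x then 1 else (0::real))"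
  proof (rule sum.cong[OF refl])
    fix b assume b: "b \<in> HH m"
    show "indicator (At m b) x = (if b = hb m x then 1 else (0::real))"
    proof (cases "b = hb m x")
      case True then show ?thesis using hb_At[OF x] by simp
    next
      case False then have "x \<notin> At m b" using At_hb[OF b] by metis
      then show ?thesis using False by simp
    qed
  qed
  also have "\<dots> = 1" using hb_HH[OF x] HH_finite by simp
  finally show ?thesis .
qed

lemma partition: fixes f :: "'a \<Rightarrow> real" shows "integrable M f \<Longrightarrow>
   integral\<^sup>L M f = (\<Sum>b\<in>HH m. integral\<^sup>L M (\<lambda>x. f x * indicator (At m b) x))"
proof -
  assume f: "integrable M f"
  have "integral\<^sup>L M f = integral\<^sup>L M (\<lambda>x. \<Sum>b\<in>HH m. f x * indicator (At m b) x)"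
  proof (rule Bochner_Integration.integral_cong[OF refl])
    fix x assume x: "x \<in> space M"
    have "f x = f x * (\<Sum>b\<in>HH m. indicator (At m b) x)" using sum_ind[OF x] by simp
    also have "\<dots> = (\<Sum>b\<in>HH m. f x * indicator (At m b) x)" by (rule sum_distrib_left)
    finally show "f x = (\<Sum>b\<in>HH m. f x * indicator (At m b) x)" .
  qed
  also have "\<dots> = (\<Sum>b\<in>HH m. integral\<^sup>L M (\<lambda>x. f x * indicator (At m b) x))"
    by (rule Bochner_Integration.integral_sum) (intro integrable_real_mult_indicator At_sets f)
  finally show ?thesis .
qed

lemma hdet_eq: "hdet m g \<Longrightarrow> x \<in> space M \<Longrightarrow> y \<in> space M \<Longrightarrow>
   (\<And>i. i \<in> {1..<m} \<Longrightarrow> r i x = r i y) \<Longrightarrow> g x = g y"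
  unfolding hdet_def by blast

lemma hdet_int: "hdet m g \<Longrightarrow> integrable M g"
proof -
  assume h: "hdet m g"
  define G where "G b = g (SOME x. x \<in> At m b)" for b
  have "g ` space M \<subseteq> G ` HH m"
  proof
    fix y assume "y \<in> g ` space M"
    then obtain x where x: "x \<in> space M" "y = g x" by auto
    let ?x = "SOME x'. x' \<in> At m (hb m x)"
    have "?x \<in> At m (hb m x)" using hb_At[OF x(1)] by (rule someI)
    then have xs: "?x \<in> space M" and "\<forall>i\<in>{1..<m}. r i ?x = hb m x i"
      unfolding At_def by auto
    then have "\<forall>i\<in>{1..<m}. r i ?x = r i x" unfolding hb_def by simp
    then have "g ?x = g x" using hdet_eq[OF h xs x(1)] by blast
    then have "y = G (hb m x)" using x(2) unfolding G_def by simp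
    then show "y \<in> G ` HH m" using hb_HH[OF x(1)] by blast
  qed
  then have fin: "finite (g ` space M)" using HH_finite finite_subset by blast
  have "\<forall>x\<in>space M. norm (g x) \<le> Max (abs ` g ` space M)"
    using fin by (auto intro!: Max_ge)
  then have "AE x in M. norm (g x) \<le> Max (abs ` g ` space M)" by (simp add: AE_I2)
  moreover have "g \<in> borel_measurable M" using h unfolding hdet_def by blast
  ultimately show ?thesis by (rule integrable_const_bound)
qed

lemma hdet_const: "hdet m (\<lambda>x. c)"
  unfolding hdet_def by simp

lemma hdet_r: "1 \<le> i \<Longrightarrow> i < m \<Longrightarrow> hdet m (r i)"
  unfolding hdet_def using rmeas[of i] by auto

lemma hdet_I: "g \<in> borel_measurable M \<Longrightarrow> (\<And>x y. x \<in> space M \<Longrightarrow> y \<in> space M \<Longrightarrow>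
   (\<And>i. i \<in> {1..<m} \<Longrightarrow> r i x = r i y) \<Longrightarrow> g x = g y) \<Longrightarrow> hdet m g"
  unfolding hdet_def by blast

lemma hdet_meas: "hdet m g \<Longrightarrow> g \<in> borel_measurable M"
  unfolding hdet_def by blast

lemma hdet_mono: assumes h: "hdet m g" and mm: "m \<le> m'" shows "hdet m' g"
proof (rule hdet_I)
  show "g \<in> borel_measurable M" using h by (rule hdet_meas)
  fix x y assume x: "x \<in> space M" and y: "y \<in> space M"
    and e: "\<And>i. i \<in> {1..<m'} \<Longrightarrow> r i x = r i y"
  have "\<And>i. i \<in> {1..<m} \<Longrightarrow> r i x = r i y" using e mm by simp
  then show "g x = g y" by (rule hdet_eq[OF h x y])
qed

lemma hdet_add: assumes f: "hdet m f" and g: "hdet m g" shows "hdet m (\<lambda>x. f x + g x)"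
proof (rule hdet_I)
  show "(\<lambda>x. f x + g x) \<in> borel_measurable M"
    by (rule borel_measurable_add[OF hdet_meas[OF f] hdet_meas[OF g]])
  fix x y assume x: "x \<in> space M" and y: "y \<in> space M"
    and e: "\<And>i. i \<in> {1..<m} \<Longrightarrow> r i x = r i y"
  show "f x + g x = f y + g y" using hdet_eq[OF f x y e] hdet_eq[OF g x y e] by simp
qed

lemma hdet_diff: assumes f: "hdet m f" and g: "hdet m g" shows "hdet m (\<lambda>x. f x - g x)"
proof (rule hdet_I)
  show "(\<lambda>x. f x - g x) \<in> borel_measurable M"
    by (rule borel_measurable_diff[OF hdet_meas[OF f] hdet_meas[OF g]])
  fix x y assume x: "x \<in> space M" and y: "y \<in> space M"
    and e: "\<And>i. i \<in> {1..<m} \<Longrightarrow> r i x = r i y"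
  show "f x - g x = f y - g y" using hdet_eq[OF f x y e] hdet_eq[OF g x y e] by simp
qed

lemma hdet_mult: assumes f: "hdet m f" and g: "hdet m g" shows "hdet m (\<lambda>x. f x * g x)"
proof (rule hdet_I)
  show "(\<lambda>x. f x * g x) \<in> borel_measurable M"
    by (rule borel_measurable_times[OF hdet_meas[OF f] hdet_meas[OF g]])
  fix x y assume x: "x \<in> space M" and y: "y \<in> space M"
    and e: "\<And>i. i \<in> {1..<m} \<Longrightarrow> r i x = r i y"
  show "f x * g x = f y * g y" using hdet_eq[OF f x y e] hdet_eq[OF g x y e] by simp
qed

lemma hdet_divc: assumes f: "hdet m f" shows "hdet m (\<lambda>x. f x / c)"
proof (rule hdet_I)
  show "(\<lambda>x. f x / c) \<in> borel_measurable M"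
    by (rule borel_measurable_divide[OF hdet_meas[OF f] borel_measurable_const])
  fix x y assume x: "x \<in> space M" and y: "y \<in> space M"
    and e: "\<And>i. i \<in> {1..<m} \<Longrightarrow> r i x = r i y"
  show "f x / c = f y / c" using hdet_eq[OF f x y e] by simp
qed

lemma hdet_sum: "(\<And>i. i \<in> S \<Longrightarrow> hdet m (f i)) \<Longrightarrow> hdet m (\<lambda>x. \<Sum>i\<in>S. f i x)"
proof -
  assume a: "\<And>i. i \<in> S \<Longrightarrow> hdet m (f i)"
  have "(\<lambda>x. \<Sum>i\<in>S. f i x) \<in> borel_measurable M"
    using a unfolding hdet_def by (intro borel_measurable_sum) auto
  moreover have "(\<Sum>i\<in>S. f i x) = (\<Sum>i\<in>S. f i y)"
    if "x \<in> space M" "y \<in> space M" "\<forall>i\<in>{1..<m}. r i x = r i y" for x y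
    using a that by (intro sum.cong refl) (metis hdet_eq)
  ultimately show ?thesis unfolding hdet_def by blast
qed

lemma hdet_pbar: "k < m \<Longrightarrow> hdet m (pbar r k)"
proof -
  assume k: "k < m"
  have "hdet m (\<lambda>x. (\<Sum>i=1..k. r i x) / real k)"
    using k by (intro hdet_divc hdet_sum hdet_r) auto
  then show ?thesis unfolding pbar_def[abs_def] by simp
qed

lemma hdet_qq: "1 \<le> i \<Longrightarrow> i \<le> m \<Longrightarrow> hdet m (qq i)"
proof -
  assume i: "1 \<le> i" "i \<le> m"
  have "hdet m (\<lambda>x. lam i * p + (1 - lam i) * pbar r (i - 1) x)"
    using i by (intro hdet_add hdet_mult hdet_const hdet_pbar) auto
  then show ?thesis unfolding qq_def[abs_def] by simp
qed

lemma hdet_rhat: "1 \<le> i \<Longrightarrow> i < m \<Longrightarrow> hdet m (rhat lam r i)"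
proof -
  assume i: "1 \<le> i" "i < m"
  show ?thesis
  proof (cases "i = 1")
    case True
    have "hdet m (r 1)" using i by (intro hdet_r) auto
    then show ?thesis unfolding rhat_def[abs_def] using True by simp
  next
    case False
    have "hdet m (\<lambda>x. (r i x - (1 - lam i) * pbar r (i - 1) x) / lam i)"
      using i by (intro hdet_divc hdet_diff hdet_mult hdet_const hdet_pbar hdet_r) auto
    then show ?thesis unfolding rhat_def[abs_def] using False by simp
  qed
qed

lemma atom:
  assumes m: "1 \<le> m" and b: "\<forall>i\<in>{1..<m}. b i \<in> {0, 1}"
  shows "measure M {x\<in>space M. (\<forall>i\<in>{1..<m}. r i x = b i) \<and> r m x = 1}
     = (lam m * p + (1 - lam m) * ((\<Sum>i=1..<m. b i) / real (m - 1))) * measure M (At m b)"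
proof (cases "m = 1")
  case True
  have "measure M {x\<in>space M. r 1 x = 1} = p" using RP unfolding reinforced_process_def by blast
  moreover have "At 1 b = space M" unfolding At_def by auto
  ultimately show ?thesis using True lam1 prob_space by simp
next
  case False
  then have "m \<ge> 2" using m by auto
  then show ?thesis using RP b unfolding reinforced_process_def At_def by blast
qed

lemma set_eq1: "1 \<le> m \<Longrightarrow> {1..m - 1} = {1..<(m::nat)}" by auto

lemma key:
  assumes m: "1 \<le> m" and g: "hdet m g"
  shows "expectation (\<lambda>x. r m x * g x) = expectation (\<lambda>x. qq m x * g x)"
proof -
  have i1: "integrable M (\<lambda>x. r m x * g x)"
    using m g by (intro hdet_int[of "Suc m"] hdet_mult hdet_r hdet_mono[OF g]) auto
  have i2: "integrable M (\<lambda>x. qq m x * g x)"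
    using m g by (intro hdet_int[of m] hdet_mult hdet_qq) auto
  have "expectation (\<lambda>x. r m x * g x * indicator (At m b) x) =
        expectation (\<lambda>x. qq m x * g x * indicator (At m b) x)" if b: "b \<in> HH m" for b
  proof (cases "At m b = {}")
    case True then show ?thesis by simp
  next
    case False
    then obtain x0 where x0: "x0 \<in> At m b" by blast
    have x0s: "x0 \<in> space M" using x0 unfolding At_def by auto
    define c where "c = g x0"
    define qb where "qb = lam m * p + (1 - lam m) * ((\<Sum>i=1..<m. b i) / real (m - 1))"
    define S where "S = {x\<in>space M. (\<forall>i\<in>{1..<m}. r i x = b i) \<and> r m x = 1}"
    have b01: "\<forall>i\<in>{1..<m}. b i \<in> {0, 1}" using b unfolding HH_def by auto
    have gc: "g x = c" if "x \<in> At m b" for x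
    proof -
      have "x \<in> space M" "\<forall>i\<in>{1..<m}. r i x = r i x0" using that x0 unfolding At_def by auto
      then show ?thesis unfolding c_def using hdet_eq[OF g _ x0s] by blast
    qed
    have qc: "qq m x = qb" if "x \<in> At m b" for x
    proof -
      have "pbar r (m - 1) x = (\<Sum>i=1..<m. r i x) / real (m - 1)"
        unfolding pbar_def using set_eq1[OF m] by simp
      also have "\<dots> = (\<Sum>i=1..<m. b i) / real (m - 1)"
        using that unfolding At_def by (intro arg_cong[where f="\<lambda>t. t / real (m - 1)"] sum.cong) auto
      finally show ?thesis unfolding qq_def qb_def by simp
    qed
    have "expectation (\<lambda>x. r m x * g x * indicator (At m b) x) =
          expectation (\<lambda>x. c * indicator S x)"
    proof (rule Bochner_Integration.integral_cong[OF refl])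
      fix x assume x: "x \<in> space M"
      show "r m x * g x * indicator (At m b) x = c * indicator S x"
      proof (cases "x \<in> At m b")
        case True
        then have "x \<in> S \<longleftrightarrow> r m x = 1" unfolding S_def At_def by auto
        moreover have "r m x = 0 \<or> r m x = 1" using r01 m x by auto
        ultimately show ?thesis using gc[OF True] True by (auto simp: indicator_def)
      next
        case False
        then have "x \<notin> S" unfolding S_def At_def by auto
        then show ?thesis using False by simp
      qed
    qed
    also have "\<dots> = c * measure M S"
    proof -
      have "S \<subseteq> space M" unfolding S_def by auto
      then show ?thesis by (simp add: Int_absorb2)
    qed
    also have "measure M S = qb * measure M (At m b)"
      unfolding S_def qb_def by (rule atom[OF m b01])
    also have "c * (qb * measure M (At m b)) = expectation (\<lambda>x. qb * c * indicator (At m b) x)"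
      using sets.sets_into_space[OF At_sets] by (simp add: Int_absorb2)
    also have "\<dots> = expectation (\<lambda>x. qq m x * g x * indicator (At m b) x)"
    proof (rule Bochner_Integration.integral_cong[OF refl])
      fix x assume x: "x \<in> space M"
      show "qb * c * indicator (At m b) x = qq m x * g x * indicator (At m b) x"
        by (cases "x \<in> At m b") (auto simp: gc qc)
    qed
    finally show ?thesis .
  qed
  then show ?thesis
    using partition[OF i1, of m] partition[OF i2, of m] by (simp cong: sum.cong)
qed

lemma int_r: "1 \<le> i \<Longrightarrow> integrable M (r i)"
  by (rule hdet_int[OF hdet_r[of i "Suc i"]]) auto

lemma int_pbar: "integrable M (pbar r k)"
  by (rule hdet_int[OF hdet_pbar[of k "Suc k"]]) auto

lemma int_pbar2: "integrable M (\<lambda>x. (pbar r k x)\<^sup>2)"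
proof -
  have "hdet (Suc k) (\<lambda>x. pbar r k x * pbar r k x)"
    by (intro hdet_mult hdet_pbar) auto
  then show ?thesis unfolding power2_eq_square by (rule hdet_int)
qed

lemma key1: "1 \<le> m \<Longrightarrow> expectation (r m) = expectation (qq m)"
  using key[of m "\<lambda>x. 1"] hdet_const by simp

lemma Eqq_form: "expectation (qq i) = lam i * p + (1 - lam i) * expectation (pbar r (i - 1))"
proof -
  have "expectation (qq i) = expectation (\<lambda>x. lam i * p + (1 - lam i) * pbar r (i - 1) x)"
    unfolding qq_def by simp
  also have "\<dots> = expectation (\<lambda>x. lam i * p) + expectation (\<lambda>x. (1 - lam i) * pbar r (i - 1) x)"
    by (rule Bochner_Integration.integral_add) (auto intro: int_pbar)
  also have "\<dots> = lam i * p + (1 - lam i) * expectation (pbar r (i - 1))"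
    by (simp add: prob_space)
  finally show ?thesis .
qed

lemma Epbar: assumes k: "1 \<le> k" and e: "\<And>j. 1 \<le> j \<Longrightarrow> j \<le> k \<Longrightarrow> expectation (r j) = p"
  shows "expectation (pbar r k) = p"
proof -
  have "expectation (pbar r k) = expectation (\<lambda>x. \<Sum>j=1..k. r j x) / real k"
    unfolding pbar_def by simp
  also have "expectation (\<lambda>x. \<Sum>j=1..k. r j x) = (\<Sum>j=1..k. expectation (r j))"
    by (rule Bochner_Integration.integral_sum) (auto intro: int_r)
  also have "\<dots> = (\<Sum>j=1..k. p)" using e by (intro sum.cong) auto
  finally show ?thesis using k by simp
qed

lemma Er: "1 \<le> i \<Longrightarrow> expectation (r i) = p"
proof (induction i rule: less_induct)
  case (less i)
  have "expectation (r i) = lam i * p + (1 - lam i) * expectation (pbar r (i - 1))"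
    using key1[OF less.prems] Eqq_form by simp
  also have "\<dots> = p"
  proof (cases "i = 1")
    case True then show ?thesis using lam1 by simp
  next
    case False
    then have "expectation (pbar r (i - 1)) = p" using less by (intro Epbar) auto
    then show ?thesis by (simp add: algebra_simps)
  qed
  finally show ?case .
qed

lemma Eqq: "1 \<le> i \<Longrightarrow> expectation (qq i) = p"
  using key1[of i] Er[of i] by simp

lemma d_eq: "1 \<le> i \<Longrightarrow> rhat lam r i x - p = (r i x - qq i x) / lam i"
proof (cases "i = 1")
  case True then show ?thesis using lam1 by (simp add: rhat_def qq_def)
next
  case False
  assume "1 \<le> i"
  then have "0 < lam i" by (rule lampos)
  then show ?thesis using False by (simp add: rhat_def qq_def field_simps)
qed

lemma hdet_d: "1 \<le> i \<Longrightarrow> i < m \<Longrightarrow> hdet m (\<lambda>x. rhat lam r i x - p)"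
  by (intro hdet_diff hdet_rhat hdet_const)

lemma orth: assumes i: "1 \<le> i" and g: "hdet i g"
  shows "expectation (\<lambda>x. (rhat lam r i x - p) * g x) = 0"
proof -
  have i1: "integrable M (\<lambda>x. r i x * g x)"
    using i g by (intro hdet_int[of "Suc i"] hdet_mult hdet_r hdet_mono[OF g]) auto
  have i2: "integrable M (\<lambda>x. qq i x * g x)"
    using i g by (intro hdet_int[of i] hdet_mult hdet_qq) auto
  have "expectation (\<lambda>x. (rhat lam r i x - p) * g x) = expectation (\<lambda>x. (r i x * g x - qq i x * g x) / lam i)"
    using d_eq[OF i] by (simp add: algebra_simps)
  also have "\<dots> = (expectation (\<lambda>x. r i x * g x) - expectation (\<lambda>x. qq i x * g x)) / lam i"
    using i1 i2 by simp
  also have "\<dots> = 0" using key[OF i g] by simp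
  finally show ?thesis .
qed

lemma Esq_affine:
  fixes P :: "'a \<Rightarrow> real"
  assumes P: "integrable M P" and P2: "integrable M (\<lambda>x. (P x)\<^sup>2)"
  shows "expectation (\<lambda>x. (a + c * P x)\<^sup>2) = (a + c * expectation P)\<^sup>2 + c\<^sup>2 * variance P"
proof -
  have "expectation (\<lambda>x. (a + c * P x)\<^sup>2) = expectation (\<lambda>x. a\<^sup>2 + ((2 * a * c) * P x + c\<^sup>2 * (P x)\<^sup>2))"
    by (simp add: power2_eq_square algebra_simps)
  also have "\<dots> = a\<^sup>2 + ((2 * a * c) * expectation P + c\<^sup>2 * expectation (\<lambda>x. (P x)\<^sup>2))"
    using P P2 by (simp add: prob_space)
  also have "\<dots> = (a + c * expectation P)\<^sup>2 + c\<^sup>2 * (expectation (\<lambda>x. (P x)\<^sup>2) - (expectation P)\<^sup>2)"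
    by (simp add: power2_eq_square algebra_simps)
  also have "expectation (\<lambda>x. (P x)\<^sup>2) - (expectation P)\<^sup>2 = variance P"
    by (rule variance_eq[OF P P2, symmetric])
  finally show ?thesis .
qed

lemma dsq: assumes i: "1 \<le> i"
  shows "expectation (\<lambda>x. (rhat lam r i x - p)\<^sup>2)
     = (p * (1 - p) - (1 - lam i)\<^sup>2 * variance (pbar r (i - 1))) / (lam i)\<^sup>2"
proof -
  have hq: "hdet i (qq i)" using i by (intro hdet_qq) auto
  have ir: "integrable M (r i)" using i by (rule int_r)
  have iq: "integrable M (qq i)" using hq by (rule hdet_int)
  have irq: "integrable M (\<lambda>x. r i x * qq i x)"
    using i hq by (intro hdet_int[of "Suc i"] hdet_mult hdet_r hdet_mono[OF hq]) auto
  have iqq: "integrable M (\<lambda>x. qq i x * qq i x)"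
    using hq by (intro hdet_int[of i] hdet_mult)
  have "expectation (\<lambda>x. (rhat lam r i x - p)\<^sup>2) =
        expectation (\<lambda>x. (r i x - 2 * (r i x * qq i x) + qq i x * qq i x) / (lam i)\<^sup>2)"
  proof (rule Bochner_Integration.integral_cong[OF refl])
    fix x assume x: "x \<in> space M"
    have "r i x * r i x = r i x" using r01[OF i x] by auto
    then show "(rhat lam r i x - p)\<^sup>2 = (r i x - 2 * (r i x * qq i x) + qq i x * qq i x) / (lam i)\<^sup>2"
      unfolding d_eq[OF i] by (simp add: power2_eq_square field_simps)
  qed
  also have "\<dots> = (expectation (r i) - 2 * expectation (\<lambda>x. r i x * qq i x) + expectation (\<lambda>x. qq i x * qq i x)) / (lam i)\<^sup>2"
    using ir irq iqq by simp
  also have "expectation (\<lambda>x. r i x * qq i x) = expectation (\<lambda>x. qq i x * qq i x)"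
    by (rule key[OF i hq])
  also have "expectation (r i) = p" using Er[OF i] .
  also have "expectation (\<lambda>x. qq i x * qq i x) = p\<^sup>2 + (1 - lam i)\<^sup>2 * variance (pbar r (i - 1))"
  proof -
    have "expectation (\<lambda>x. qq i x * qq i x) = expectation (\<lambda>x. (lam i * p + (1 - lam i) * pbar r (i - 1) x)\<^sup>2)"
      unfolding qq_def power2_eq_square by simp
    also have "\<dots> = (lam i * p + (1 - lam i) * expectation (pbar r (i - 1)))\<^sup>2 + (1 - lam i)\<^sup>2 * variance (pbar r (i - 1))"
      by (rule Esq_affine[OF int_pbar int_pbar2])
    also have "lam i * p + (1 - lam i) * expectation (pbar r (i - 1)) = p"
      using Eqq_form[of i] Eqq[OF i] by simp
    finally show ?thesis .
  qed
  finally show ?thesis by (simp add: power2_eq_square algebra_simps)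
qed

lemma Edd: assumes i: "1 \<le> i" and j: "1 \<le> j"
  shows "expectation (\<lambda>x. (rhat lam r i x - p) * (rhat lam r j x - p)) =
         (if i = j then expectation (\<lambda>x. (rhat lam r i x - p)\<^sup>2) else 0)"
proof (cases "i = j")
  case True then show ?thesis by (simp add: power2_eq_square)
next
  case False
  show ?thesis
  proof (cases "i < j")
    case True
    have "expectation (\<lambda>x. (rhat lam r j x - p) * (rhat lam r i x - p)) = 0"
      using True i j by (intro orth hdet_d) auto
    then show ?thesis using False by (simp add: mult.commute)
  next
    case lt: False
    have "expectation (\<lambda>x. (rhat lam r i x - p) * (rhat lam r j x - p)) = 0"
      using lt False i j by (intro orth hdet_d) auto
    then show ?thesis using False by simp
  qed
qed

lemma int_dd: "1 \<le> i \<Longrightarrow> 1 \<le> j \<Longrightarrow> integrable M (\<lambda>x. (rhat lam r i x - p) * (rhat lam r j x - p))"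
  by (rule hdet_int[of "Suc (max i j)"]) (intro hdet_mult hdet_d; simp)

lemma int_d: "1 \<le> i \<Longrightarrow> integrable M (\<lambda>x. rhat lam r i x - p)"
  by (rule hdet_int[of "Suc i"]) (intro hdet_d; simp)

lemma Ed: "1 \<le> i \<Longrightarrow> expectation (\<lambda>x. rhat lam r i x - p) = 0"
  using orth[of i "\<lambda>x. 1"] hdet_const by simp

end

theorem theoremA13:
  fixes M :: "'a measure" and p :: real and lam w :: "nat \<Rightarrow> real"
    and r :: "nat \<Rightarrow> 'a \<Rightarrow> real" and n :: nat
  assumes "prob_space M"
    and "0 < p" and "p < 1"
    and "lam 1 = 1"
    and "\<forall>k>1. 0 < lam k \<and> lam k \<le> lam (k - 1)"
    and "reinforced_process M p lam r"
    and "n \<ge> 1"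
    and "\<forall>i\<in>{1..n}. w i > 0"
  shows "prob_space.variance M (phat w lam r n)
       = (1 / (\<Sum>i=1..n. w i)^2) *
         (\<Sum>i=1..n. (w i)^2 / (lam i)^2 *
            (p * (1 - p) - (1 - lam i)^2 * prob_space.variance M (pbar r (i - 1))))"
proof -
  interpret R: rproc M p lam r
    using assms(1,4,5,6) unfolding rproc_def rproc_axioms_def by auto
  define W where "W = (\<Sum>i=1..n. w i)"
  have W: "W > 0" unfolding W_def using assms(7,8) by (intro sum_pos) auto
  define d where "d i x = rhat lam r i x - p" for i x
  define D where "D x = (\<Sum>i=1..n. w i * d i x)" for x
  have ph: "phat w lam r n x = p + D x / W" for x
  proof -
    have "D x = (\<Sum>i=1..n. w i * rhat lam r i x) - (\<Sum>i=1..n. w i) * p"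
      unfolding D_def d_def by (simp add: right_diff_distrib sum_subtractf sum_distrib_right)
    then show ?thesis unfolding phat_def W_def[symmetric] using W by (simp add: field_simps)
  qed
  have intD: "integrable M D"
    unfolding D_def d_def by (intro Bochner_Integration.integrable_sum integrable_mult_right R.int_d) auto
  have ED: "integral\<^sup>L M D = 0"
  proof -
    have "integral\<^sup>L M D = (\<Sum>i=1..n. integral\<^sup>L M (\<lambda>x. w i * d i x))"
      unfolding D_def d_def by (rule Bochner_Integration.integral_sum) (auto intro: R.int_d)
    also have "\<dots> = 0" unfolding d_def using R.Ed by simp
    finally show ?thesis .
  qed
  have Eph: "integral\<^sup>L M (phat w lam r n) = p"
  proof -
    have "integral\<^sup>L M (phat w lam r n) = integral\<^sup>L M (\<lambda>x. p + D x / W)" unfolding ph by simp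
    also have "\<dots> = p" using intD ED by (simp add: R.prob_space)
    finally show ?thesis .
  qed
  have "prob_space.variance M (phat w lam r n) = integral\<^sup>L M (\<lambda>x. (D x)\<^sup>2 / W\<^sup>2)"
    unfolding Eph ph by (simp add: power_divide)
  also have "\<dots> = integral\<^sup>L M (\<lambda>x. (D x)\<^sup>2) / W\<^sup>2" by simp
  also have "integral\<^sup>L M (\<lambda>x. (D x)\<^sup>2) = (\<Sum>i=1..n. \<Sum>j=1..n. w i * w j * integral\<^sup>L M (\<lambda>x. d i x * d j x))"
  proof -
    have "integral\<^sup>L M (\<lambda>x. (D x)\<^sup>2) = integral\<^sup>L M (\<lambda>x. \<Sum>i=1..n. \<Sum>j=1..n. w i * w j * (d i x * d j x))"
      unfolding D_def power2_eq_square sum_product by (simp add: algebra_simps)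
    also have "\<dots> = (\<Sum>i=1..n. integral\<^sup>L M (\<lambda>x. \<Sum>j=1..n. w i * w j * (d i x * d j x)))"
      by (rule Bochner_Integration.integral_sum)
        (intro Bochner_Integration.integrable_sum integrable_mult_right, unfold d_def, rule R.int_dd; simp)
    also have "\<dots> = (\<Sum>i=1..n. \<Sum>j=1..n. integral\<^sup>L M (\<lambda>x. w i * w j * (d i x * d j x)))"
      by (intro sum.cong refl Bochner_Integration.integral_sum)
        (intro integrable_mult_right, unfold d_def, rule R.int_dd; simp)
    also have "\<dots> = (\<Sum>i=1..n. \<Sum>j=1..n. w i * w j * integral\<^sup>L M (\<lambda>x. d i x * d j x))"
      by simp
    finally show ?thesis .
  qed
  also have "\<dots> = (\<Sum>i=1..n. (w i)\<^sup>2 * integral\<^sup>L M (\<lambda>x. (d i x)\<^sup>2))"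
  proof (rule sum.cong[OF refl])
    fix i assume i: "i \<in> {1..n}"
    have "(\<Sum>j=1..n. w i * w j * integral\<^sup>L M (\<lambda>x. d i x * d j x)) =
          (\<Sum>j=1..n. if i = j then w i * w i * integral\<^sup>L M (\<lambda>x. (d i x)\<^sup>2) else 0)"
      using i unfolding d_def by (intro sum.cong refl) (simp add: R.Edd)
    also have "\<dots> = (w i)\<^sup>2 * integral\<^sup>L M (\<lambda>x. (d i x)\<^sup>2)"
      using i by (simp add: power2_eq_square)
    finally show "(\<Sum>j=1..n. w i * w j * integral\<^sup>L M (\<lambda>x. d i x * d j x)) = (w i)\<^sup>2 * integral\<^sup>L M (\<lambda>x. (d i x)\<^sup>2)" .
  qed
  also have "\<dots> = (\<Sum>i=1..n. (w i)\<^sup>2 / (lam i)\<^sup>2 *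
            (p * (1 - p) - (1 - lam i)\<^sup>2 * prob_space.variance M (pbar r (i - 1))))"
    unfolding d_def by (intro sum.cong refl) (simp add: R.dsq)
  finally show ?thesis unfolding W_def by simp
qed

end
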